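(* Let $\Omega\subset\mathbb{R}^3$ be open, let $x\in\Omega$ and $0<r<\operatorname{dist}(x,\partial\Omega)$. Let $u\in C^2(\Omega)^3$ satisfy $\nabla\cdot u=0$ in $\Omega$, let $v\in\mathbb{R}^3$ be a constant vector, and let $p$ be a (classical) solution of $$-\Delta p=\nabla\cdot(u\cdot\nabla u)=\sum_{i,j=1}^3\partial_i\partial_j(u_iu_j)\quad\text{in }\Omega.$$ Then $$\partial_r\Big\{\overline{p}(x,r)+\fint_{|\xi|=1}\big|\xi\cdot(u(x+r\xi)-v)\big|^2\,dS(\xi)\Big\}=-\frac1r\fint_{|\xi|=1}\Big[3\big|\xi\cdot(u(x+r\xi)-v)\big|^2-\big|u(x+r\xi)-v\big|^2\Big]dS(\xi).$$
   Context: For a function $f$, $\overline{f}(x,r)=\frac{1}{4\pi r^2}\int_{|x-y|=r}f(y)\,dS(y)=\fint_{|\xi|=1}f(x+r\xi)\,dS(\xi)$ denotes the spherical average, where $\fint$ denotes the normalized integral (integral divided by the area of the unit sphere $\mathbb{S}^2$). *)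

theory Defs
  imports "HOL-Analysis.Analysis"
begin

definition partial :: "3 \<Rightarrow> (real^3 \<Rightarrow> real) \<Rightarrow> real^3 \<Rightarrow> real" where
  "partial i f y = deriv (\<lambda>t. f (y + t *\<^sub>R axis i 1)) 0"

definition C2_on :: "(real^3) set \<Rightarrow> (real^3 \<Rightarrow> real) \<Rightarrow> bool" where
  "C2_on S f \<longleftrightarrow> (\<forall>y\<in>S. f differentiable (at y))
     \<and> (\<forall>i. \<forall>y\<in>S. partial i f differentiable (at y))
     \<and> (\<forall>i j. continuous_on S (partial j (partial i f)))"

definition laplacian :: "(real^3 \<Rightarrow> real) \<Rightarrow> real^3 \<Rightarrow> real" where
  "laplacian f y = (\<Sum>i\<in>UNIV. partial i (partial i f) y)"

definition sph :: "real \<Rightarrow> real \<Rightarrow> real^3" where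
  "sph \<theta> \<phi> = vector [sin \<theta> * cos \<phi>, sin \<theta> * sin \<phi>, cos \<theta>]"

text \<open>Normalized surface integral over S^2 (surface measure in spherical coordinates,
  dS = sin theta dtheta dphi, divided by the area 4 pi).\<close>
definition sphere_avg :: "(real^3 \<Rightarrow> real) \<Rightarrow> real" where
  "sphere_avg g = (1 / (4 * pi)) *
     (LBINT \<phi>=0..2*pi. (LBINT \<theta>=0..pi. g (sph \<theta> \<phi>) * sin \<theta>))"

end

theory Submission
  imports Defs
begin


lemma sph_nth [simp]:
  "sph t f $ 1 = sin t * cos f" "sph t f $ 2 = sin t * sin f" "sph t f $ 3 = cos t"
  by (simp_all add: sph_def)

lemma sph_expand: "sph t f = (sin t * cos f) *\<^sub>R axis 1 1 + (sin t * sin f) *\<^sub>R axis 2 1 + cos t *\<^sub>R axis 3 1"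
  by (simp add: vec_eq_iff forall_3 axis_def)

lemma norm_sph [simp]: "norm (sph t f) = 1"
proof -
  have "sph t f \<bullet> sph t f = (sin t)^2 * ((sin f)^2 + (cos f)^2) + (cos t)^2"
    unfolding inner_vec_def sum_3 sph_nth power2_eq_square inner_real_def by algebra
  also have "\<dots> = 1" by simp
  finally show ?thesis by (simp add: norm_eq_sqrt_inner)
qed

lemma continuous_sph [continuous_intros]:
  fixes a b :: "'a::t2_space \<Rightarrow> real"
  assumes "continuous_on S a" "continuous_on S b" shows "continuous_on S (\<lambda>z. sph (a z) (b z))"
  unfolding sph_expand by (intro continuous_intros assms)

definition rect :: "(real \<times> real) set" where "rect = cbox (0,0) (2*pi, pi)"

definition SA :: "(real^3 \<Rightarrow> real) \<Rightarrow> real" where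
  "SA g = integral rect (\<lambda>z. g (sph (snd z) (fst z)) * sin (snd z)) / (4*pi)"

lemma sphere_avg_SA:
  assumes "continuous_on (sphere 0 1) g"
  shows "sphere_avg g = SA g"
proof -
  define h where "h = (\<lambda>z::real\<times>real. g (sph (snd z) (fst z)) * sin (snd z))"
  have cs: "continuous_on UNIV (\<lambda>z::real\<times>real. sph (snd z) (fst z))"
    by (intro continuous_intros)
  have cg: "continuous_on UNIV (\<lambda>z::real\<times>real. g (sph (snd z) (fst z)))"
    by (rule continuous_on_compose2[OF assms cs]) auto
  have ch: "continuous_on UNIV h"
    unfolding h_def by (intro continuous_on_mult cg continuous_intros)
  have chf: "continuous_on S (\<lambda>t. h (f,t))" for f S
    by (rule continuous_on_compose2[OF ch]) (intro continuous_intros, simp)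
  have inner: "(LBINT t=0..pi. g (sph t f) * sin t) = integral {0..pi} (\<lambda>t. h (f,t))" for f
  proof -
    have "(LBINT t=ereal 0..ereal pi. h (f,t)) = integral {0..pi} (\<lambda>t. h (f,t))"
      by (intro interval_integral_eq_integral borel_integrable_atLeastAtMost' chf) simp
    then show ?thesis by (simp add: h_def zero_ereal_def)
  qed
  have cp0: "continuous_on UNIV (\<lambda>f. integral (cbox 0 pi) (\<lambda>t. h (f,t)))"
  proof (rule integral_continuous_on_param)
    have "(\<lambda>(f, t). h (f, t)) = h" by auto
    then show "continuous_on (UNIV \<times> cbox 0 pi) (\<lambda>(f, t). h (f, t))"
      using continuous_on_subset[OF ch, of "UNIV \<times> cbox 0 pi"] by simp
  qed
  have cp: "continuous_on S (\<lambda>f. integral {0..pi} (\<lambda>t. h (f,t)))" for S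
    using continuous_on_subset[OF cp0, of S] by (simp add: cbox_interval)
  have "sphere_avg g = (1/(4*pi)) * (LBINT f=0..2*pi. integral {0..pi} (\<lambda>t. h (f,t)))"
    unfolding sphere_avg_def inner ..
  also have "(LBINT f=0..2*pi. integral {0..pi} (\<lambda>t. h (f,t))) = integral {0..2*pi} (\<lambda>f. integral {0..pi} (\<lambda>t. h (f,t)))"
  proof -
    have "set_integrable lborel {0..2*pi} (\<lambda>f. integral {0..pi} (\<lambda>t. h (f,t)))"
      by (rule borel_integrable_atLeastAtMost'[OF cp])
    from interval_integral_eq_integral[OF _ this] show ?thesis by (simp add: zero_ereal_def)
  qed
  also have "\<dots> = integral rect h"
  proof -
    have "integral (cbox (0, 0) (2 * pi, pi)) h = integral (cbox 0 (2*pi)) (\<lambda>f. integral (cbox 0 pi) (\<lambda>t. h (f, t)))"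
      by (rule integral_prod_continuous) (rule continuous_on_subset[OF ch], simp)
    then show ?thesis unfolding rect_def by (simp add: cbox_interval)
  qed
  finally show ?thesis unfolding SA_def h_def by simp
qed


lemma rect_sph_cont:
  assumes "continuous_on (sphere 0 1) g"
  shows "continuous_on UNIV (\<lambda>z::real\<times>real. g (sph (snd z) (fst z)) * sin (snd z))"
proof -
  have cs: "continuous_on UNIV (\<lambda>z::real\<times>real. sph (snd z) (fst z))"
    by (intro continuous_intros)
  have cg: "continuous_on UNIV (\<lambda>z::real\<times>real. g (sph (snd z) (fst z)))"
    by (rule continuous_on_compose2[OF assms cs]) auto
  show ?thesis by (intro continuous_on_mult cg continuous_intros)
qed

lemma SA_integrable:
  assumes "continuous_on (sphere 0 1) g"
  shows "(\<lambda>z. g (sph (snd z) (fst z)) * sin (snd z)) integrable_on rect"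
  unfolding rect_def by (rule integrable_continuous, rule continuous_on_subset[OF rect_sph_cont[OF assms]]) simp

lemma SA_cong:
  assumes "\<And>\<xi>. norm \<xi> = 1 \<Longrightarrow> g \<xi> = h \<xi>"
  shows "SA g = SA h"
  unfolding SA_def using assms by simp

lemma SA_add:
  assumes "continuous_on (sphere 0 1) g" "continuous_on (sphere 0 1) h"
  shows "SA (\<lambda>\<xi>. g \<xi> + h \<xi>) = SA g + SA h"
proof -
  have "integral rect (\<lambda>z. (g (sph (snd z) (fst z)) + h (sph (snd z) (fst z))) * sin (snd z)) =
     integral rect (\<lambda>z. g (sph (snd z) (fst z)) * sin (snd z)) + integral rect (\<lambda>z. h (sph (snd z) (fst z)) * sin (snd z))"
    unfolding distrib_right by (rule integral_add[OF SA_integrable[OF assms(1)] SA_integrable[OF assms(2)]])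
  then show ?thesis unfolding SA_def by (simp add: add_divide_distrib)
qed

lemma SA_diff:
  assumes "continuous_on (sphere 0 1) g" "continuous_on (sphere 0 1) h"
  shows "SA (\<lambda>\<xi>. g \<xi> - h \<xi>) = SA g - SA h"
proof -
  have "integral rect (\<lambda>z. (g (sph (snd z) (fst z)) - h (sph (snd z) (fst z))) * sin (snd z)) =
     integral rect (\<lambda>z. g (sph (snd z) (fst z)) * sin (snd z)) - integral rect (\<lambda>z. h (sph (snd z) (fst z)) * sin (snd z))"
    unfolding left_diff_distrib by (rule integral_diff[OF SA_integrable[OF assms(1)] SA_integrable[OF assms(2)]])
  then show ?thesis unfolding SA_def by (simp add: diff_divide_distrib)
qed

lemma SA_cmult: "SA (\<lambda>\<xi>. c * g \<xi>) = c * SA g"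
  unfolding SA_def by (simp add: mult.assoc)

lemma SA_sum:
  assumes "finite I" "\<And>i. i \<in> I \<Longrightarrow> continuous_on (sphere 0 1) (g i)"
  shows "SA (\<lambda>\<xi>. \<Sum>i\<in>I. g i \<xi>) = (\<Sum>i\<in>I. SA (g i))"
  using assms
proof (induction I rule: finite_induct)
  case empty then show ?case by (simp add: SA_def)
next
  case (insert a I)
  have "SA (\<lambda>\<xi>. \<Sum>i\<in>insert a I. g i \<xi>) = SA (\<lambda>\<xi>. g a \<xi> + (\<Sum>i\<in>I. g i \<xi>))"
    using insert by simp
  also have "\<dots> = SA (g a) + SA (\<lambda>\<xi>. \<Sum>i\<in>I. g i \<xi>)"
    by (rule SA_add) (use insert in \<open>auto intro!: continuous_on_sum\<close>)
  finally show ?case using insert by simp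
qed

lemma partial_eq:
  assumes "(f has_derivative f') (at y)"
  shows "partial i f y = f' (axis i 1)"
proof -
  have "((\<lambda>t. y + t *\<^sub>R axis i 1) has_derivative (\<lambda>h. h *\<^sub>R axis i 1)) (at 0)"
    by (rule has_derivative_eq_rhs, (rule derivative_intros)+, simp)
  from diff_chain_at[OF this, of f f'] assms
  have "((\<lambda>t. f (y + t *\<^sub>R axis i 1)) has_derivative (\<lambda>h. f' (h *\<^sub>R axis i 1))) (at 0)"
    by (simp add: o_def)
  moreover have "(\<lambda>h. f' (h *\<^sub>R axis i 1)) = (\<lambda>h. h * f' (axis i 1))"
    using has_derivative_linear[OF assms] by (simp add: linear_scale)
  moreover have "(\<lambda>h. h * f' (axis i 1)) = (*) (f' (axis i 1))" by (auto simp: mult.commute)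
  ultimately have "((\<lambda>t. f (y + t *\<^sub>R axis i 1)) has_real_derivative f' (axis i 1)) (at 0)"
    by (simp add: has_field_derivative_def)
  then show ?thesis unfolding partial_def by (rule DERIV_imp_deriv)
qed

lemma has_derivative_partial:
  assumes "f differentiable (at y)"
  shows "(f has_derivative (\<lambda>h. \<Sum>i\<in>UNIV. h$i * partial i f y)) (at y)"
proof -
  from assms obtain f' where f': "(f has_derivative f') (at y)" by (auto simp: differentiable_def)
  have lin: "linear f'" using has_derivative_linear[OF f'] .
  have "f' h = (\<Sum>i\<in>UNIV. h$i * partial i f y)" for h
  proof -
    have "f' h = f' (\<Sum>i\<in>UNIV. h$i *\<^sub>R axis i 1)"
      using basis_expansion[of h, unfolded scalar_mult_eq_scaleR] by (simp only:)
    also have "\<dots> = (\<Sum>i\<in>UNIV. f' (h$i *\<^sub>R axis i 1))"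
      by (rule linear_sum[OF lin])
    also have "\<dots> = (\<Sum>i\<in>UNIV. h$i * f' (axis i 1))"
      by (rule sum.cong[OF refl]) (simp add: linear_scale[OF lin])
    finally show ?thesis using partial_eq[OF f'] by simp
  qed
  then have "f' = (\<lambda>h. \<Sum>i\<in>UNIV. h$i * partial i f y)" by auto
  then show ?thesis using f' by simp
qed

lemma partial_local:
  assumes "open S" "y \<in> S" "\<And>z. z \<in> S \<Longrightarrow> f z = g z"
  shows "partial i f y = partial i g y"
proof -
  have op: "open ((\<lambda>t::real. y + t *\<^sub>R axis i 1) -` S)"
    by (rule continuous_open_vimage[OF assms(1)]) (intro continuous_intros)
  have "eventually (\<lambda>t. t \<in> (\<lambda>t::real. y + t *\<^sub>R axis i 1) -` S) (nhds 0)"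
    by (rule eventually_nhds_in_open[OF op]) (simp add: assms(2))
  then have ev: "eventually (\<lambda>t. f (y + t *\<^sub>R axis i 1) = g (y + t *\<^sub>R axis i 1)) (nhds 0)"
    by (rule eventually_mono) (simp add: assms(3))
  have "\<And>D. DERIV (\<lambda>t. f (y + t *\<^sub>R axis i 1)) 0 :> D \<longleftrightarrow> DERIV (\<lambda>t. g (y + t *\<^sub>R axis i 1)) 0 :> D"
    by (rule DERIV_cong_ev[OF refl ev refl])
  then show ?thesis unfolding partial_def deriv_def by simp
qed

lemma chain3:
  assumes "(\<gamma> has_vector_derivative \<gamma>') (at s within S)"
    and "(f has_derivative (\<lambda>h. \<Sum>i\<in>UNIV. h$i * P i)) (at (\<gamma> s))"
  shows "((\<lambda>s. f (\<gamma> s)) has_real_derivative (\<Sum>i\<in>UNIV. \<gamma>'$i * P i)) (at s within S)"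
proof -
  have "(f has_derivative (\<lambda>h. \<Sum>i\<in>UNIV. h$i * P i)) (at (\<gamma> s) within \<gamma> ` S)"
    using assms(2) by (rule has_derivative_at_withinI)
  from vector_derivative_diff_chain_within[OF assms(1) this]
  show ?thesis by (simp add: o_def has_real_derivative_iff_has_vector_derivative)
qed

lemma cont_comp2:
  assumes "continuous_on (UNIV \<times> U) (\<lambda>(\<xi>,y). G \<xi> y)" "continuous_on S a" "continuous_on S b"
    "\<And>w. w \<in> S \<Longrightarrow> b w \<in> U"
  shows "continuous_on S (\<lambda>w. G (a w) (b w))"
proof -
  have "continuous_on S (\<lambda>w. (\<lambda>(\<xi>,y). G \<xi> y) (a w, b w))"
    by (rule continuous_on_compose2[OF assms(1) continuous_on_Pair[OF assms(2,3)]]) (use assms(4) in auto)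
  then show ?thesis by simp
qed

lemma sph_in_cball:
  assumes "cball x R \<subseteq> U" "\<bar>t\<bar> \<le> R"
  shows "x + t *\<^sub>R sph a b \<in> U"
  using assms by (auto simp: subset_iff dist_norm)

lemma RL:
  fixes F :: "real^3 \<Rightarrow> real^3 \<Rightarrow> real" and P :: "3 \<Rightarrow> real^3 \<Rightarrow> real^3 \<Rightarrow> real"
  assumes U: "cball x R \<subseteq> U" and s: "\<bar>s\<bar> < R"
    and D: "\<And>\<xi> y. y \<in> U \<Longrightarrow> (F \<xi> has_derivative (\<lambda>h. \<Sum>i\<in>UNIV. h$i * P i \<xi> y)) (at y)"
    and cP: "\<And>i. continuous_on (UNIV \<times> U) (\<lambda>(\<xi>,y). P i \<xi> y)"
    and cF: "continuous_on (UNIV \<times> U) (\<lambda>(\<xi>,y). F \<xi> y)"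
  shows "((\<lambda>t. SA (\<lambda>\<xi>. F \<xi> (x + t *\<^sub>R \<xi>))) has_real_derivative
           SA (\<lambda>\<xi>. \<Sum>i\<in>UNIV. \<xi>$i * P i \<xi> (x + s *\<^sub>R \<xi>))) (at s)"
proof -
  define R1 where "R1 = (\<bar>s\<bar> + R)/2"
  have R1: "\<bar>s\<bar> < R1" "R1 < R" using s by (auto simp: R1_def)
  define V where "V = {-R1..R1}"
  have sV: "s \<in> V" using R1 by (auto simp: V_def)
  have inU: "x + t *\<^sub>R sph a b \<in> U" if "t \<in> V" for t a b
    by (rule sph_in_cball[OF U]) (use that R1 in \<open>auto simp: V_def\<close>)
  define \<Phi> where "\<Phi> t z = F (sph (snd z) (fst z)) (x + t *\<^sub>R sph (snd z) (fst z)) * sin (snd z)" for t z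
  define d\<Phi> where "d\<Phi> t z = (\<Sum>i\<in>UNIV. sph (snd z) (fst z) $ i * P i (sph (snd z) (fst z)) (x + t *\<^sub>R sph (snd z) (fst z))) * sin (snd z)" for t z
  have der: "((\<lambda>t. \<Phi> t z) has_field_derivative d\<Phi> t z) (at t within V)" if "t \<in> V" for t z
  proof -
    let ?\<xi> = "sph (snd z) (fst z)"
    have g: "((\<lambda>t. x + t *\<^sub>R ?\<xi>) has_vector_derivative ?\<xi>) (at t within V)"
      by (rule has_vector_derivative_eq_rhs, (rule derivative_intros)+, simp)
    have "((\<lambda>t. F ?\<xi> (x + t *\<^sub>R ?\<xi>)) has_real_derivative (\<Sum>i\<in>UNIV. ?\<xi>$i * P i ?\<xi> (x + t *\<^sub>R ?\<xi>))) (at t within V)"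
      by (rule chain3[OF g D[OF inU[OF that]]])
    then show ?thesis unfolding \<Phi>_def d\<Phi>_def by (rule DERIV_cmult_right)
  qed
  have cs: "continuous_on S (\<lambda>z::real\<times>real. sph (snd z) (fst z))" for S
    by (intro continuous_intros)
  have int: "\<Phi> t integrable_on rect" if "t \<in> V" for t
  proof -
    have "continuous_on rect (\<Phi> t)"
      unfolding \<Phi>_def
      by (intro continuous_intros cont_comp2[OF cF] cs) (use inU[OF that] in auto)
    then show ?thesis unfolding rect_def by (rule integrable_continuous)
  qed
  have cd: "continuous_on (V \<times> rect) (\<lambda>(t, z). d\<Phi> t z)"
  proof -
    have "continuous_on (V \<times> rect) (\<lambda>w. d\<Phi> (fst w) (snd w))"
      unfolding d\<Phi>_def
      by (intro continuous_intros cont_comp2[OF cP] continuous_on_compose2[OF cs[of UNIV]])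
         (auto intro: inU)
    then show ?thesis by (simp add: split_def)
  qed
  have "((\<lambda>t. integral (cbox (0,0) (2*pi,pi)) (\<Phi> t)) has_field_derivative integral (cbox (0,0) (2*pi,pi)) (d\<Phi> s)) (at s within V)"
    by (rule leibniz_rule_field_derivative[OF der _ _ sV]) (use int cd in \<open>auto simp: rect_def V_def\<close>)
  then have "((\<lambda>t. integral rect (\<Phi> t) / (4*pi)) has_field_derivative integral rect (d\<Phi> s) / (4*pi)) (at s within V)"
    unfolding rect_def by (rule DERIV_cdivide)
  moreover have "at s within V = at s" unfolding V_def using R1 by (intro at_within_Icc_at) auto
  ultimately show ?thesis
    unfolding SA_def \<Phi>_def d\<Phi>_def by (simp add: sum_distrib_right)
qed


lemma vel_theta:
  "((\<lambda>\<theta>. x + t  *\<^sub>R sph \<theta> \<phi>) has_vector_derivative t  *\<^sub>R vector [cos \<theta>  *  cos \<phi>, cos \<theta>  *  sin \<phi>, - sin \<theta>]) (at \<theta> within S)"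
  unfolding sph_expand
  by (rule has_vector_derivative_eq_rhs, (rule derivative_eq_intros refl)+)
     (simp add: vec_eq_iff forall_3 axis_def)

lemma vel_phi:
  "((\<lambda>\<phi>. x + t  *\<^sub>R sph \<theta> \<phi>) has_vector_derivative t  *\<^sub>R vector [- sin \<theta>  *  sin \<phi>, sin \<theta>  *  cos \<phi>, 0]) (at \<phi> within S)"
  unfolding sph_expand
  by (rule has_vector_derivative_eq_rhs, (rule derivative_eq_intros refl)+)
     (simp add: vec_eq_iff forall_3 axis_def)

lemma ident:
  fixes t s c sf cf z1 z2 z3 q11 q12 q13 q21 q22 q23 q31 q32 q33 :: real
  assumes "s^2 + c^2 = 1" "sf^2 + cf^2 = 1"
  defines "d1 \<equiv> t  *  (c * cf * q11 + c * sf * q12 - s * q13)"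
  defines "d2 \<equiv> t  *  (c * cf * q21 + c * sf * q22 - s * q23)"
  defines "d3 \<equiv> t  *  (c * cf * q31 + c * sf * q32 - s * q33)"
  defines "e1 \<equiv> t  *  (- s * sf * q11 + s * cf * q12)"
  defines "e2 \<equiv> t  *  (- s * sf * q21 + s * cf * q22)"
  shows "t  *  c  *  (c * cf * z1 + c * sf * z2 - s * z3) + t  *  s  *  (- s * cf * z1 - s * sf * z2 - c * z3 + c * cf * d1 + c * sf * d2 - s * d3)
        + t  *  (- cf * z1 - sf * z2 - sf * e1 + cf * e2)
     = t^2  *  ((q11 + q22 + q33) - ((s * cf) * (s * cf) * q11 + (s * cf) * (s * sf) * q12 + (s * cf) * c * q13
            + (s * sf) * (s * cf) * q21 + (s * sf) * (s * sf) * q22 + (s * sf) * c * q23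
            + c * (s * cf) * q31 + c * (s * sf) * q32 + c * c * q33))  *  s
       - 2  *  t  *  ((s * cf) * z1 + (s * sf) * z2 + c * z3)  *  s"
  using assms(1,2) unfolding d1_def d2_def d3_def e1_def e2_def by algebra


lemma cont_of_deriv:
  assumes "\<And>y. y \<in> U \<Longrightarrow> (f has_derivative f' y) (at y)"
  shows "continuous_on U f"
  by (rule continuous_at_imp_continuous_on) (use assms has_derivative_continuous in blast)

lemma SI:
  fixes Z :: "3 \<Rightarrow> real^3 \<Rightarrow> real" and PZ :: "3 \<Rightarrow> 3 \<Rightarrow> real^3 \<Rightarrow> real"
  assumes U: "cball x R \<subseteq> U" and t: "\<bar>t\<bar> \<le> R"
    and D: "\<And>k y. y \<in> U \<Longrightarrow> (Z k has_derivative (\<lambda>h. \<Sum>i\<in>UNIV. h$i * PZ k i y)) (at y)"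
    and cPZ: "\<And>k i. continuous_on U (PZ k i)"
  shows "t^2 * SA (\<lambda>\<xi>. (\<Sum>k\<in>UNIV. PZ k k (x + t *\<^sub>R \<xi>)) - (\<Sum>k\<in>UNIV. \<Sum>i\<in>UNIV. \<xi>$k * \<xi>$i * PZ k i (x + t *\<^sub>R \<xi>)))
       = 2 * t * SA (\<lambda>\<xi>. \<Sum>k\<in>UNIV. \<xi>$k * Z k (x + t *\<^sub>R \<xi>))"
proof -
  define y where "y \<phi> \<theta> = x + t *\<^sub>R sph \<theta> \<phi>" for \<phi> \<theta>
  have yU: "y \<phi> \<theta> \<in> U" for \<phi> \<theta> unfolding y_def using U t by (auto simp: subset_iff dist_norm)
  have cZ: "continuous_on U (Z k)" for k by (rule cont_of_deriv[OF D])
  define z where "z k \<phi> \<theta> = Z k (y \<phi> \<theta>)" for k \<phi> \<theta>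
  define q where "q k i \<phi> \<theta> = PZ k i (y \<phi> \<theta>)" for k i \<phi> \<theta>
  have cy: "continuous_on S (\<lambda>w. y (a w) (b w))" if "continuous_on S a" "continuous_on S b"
    for S and a b :: "'a::t2_space \<Rightarrow> real"
    unfolding y_def by (intro continuous_intros that)
  have cz: "continuous_on S (\<lambda>w. z k (a w) (b w))" if "continuous_on S a" "continuous_on S b"
    for S k and a b :: "'a::t2_space \<Rightarrow> real"
    unfolding z_def by (rule continuous_on_compose2[OF cZ cy[OF that]]) (auto intro: yU)
  have cq: "continuous_on S (\<lambda>w. q k i (a w) (b w))" if "continuous_on S a" "continuous_on S b"
    for S k i and a b :: "'a::t2_space \<Rightarrow> real"
    unfolding q_def by (rule continuous_on_compose2[OF cPZ cy[OF that]]) (auto intro: yU)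
  define dz where "dz k \<phi> \<theta> = t * (cos \<theta> * cos \<phi> * q k 1 \<phi> \<theta> + cos \<theta> * sin \<phi> * q k 2 \<phi> \<theta> - sin \<theta> * q k 3 \<phi> \<theta>)" for k \<phi> \<theta>
  define ez where "ez k \<phi> \<theta> = t * (- sin \<theta> * sin \<phi> * q k 1 \<phi> \<theta> + sin \<theta> * cos \<phi> * q k 2 \<phi> \<theta>)" for k \<phi> \<theta>
  have dzD: "((\<lambda>\<theta>. z k \<phi> \<theta>) has_real_derivative dz k \<phi> \<theta>) (at \<theta> within S)" for k \<phi> \<theta> S
  proof -
    have "((\<lambda>\<theta>. Z k (y \<phi> \<theta>)) has_real_derivative
       (\<Sum>i\<in>UNIV. (t *\<^sub>R vector [cos \<theta> * cos \<phi>, cos \<theta> * sin \<phi>, - sin \<theta>] :: real^3) $ i * PZ k i (y \<phi> \<theta>))) (at \<theta> within S)"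
      unfolding y_def by (rule chain3[OF vel_theta D[OF yU[unfolded y_def]]])
    then show ?thesis unfolding z_def dz_def q_def sum_3 by (simp add: algebra_simps)
  qed
  have ezD: "((\<lambda>\<phi>. z k \<phi> \<theta>) has_real_derivative ez k \<phi> \<theta>) (at \<phi> within S)" for k \<phi> \<theta> S
  proof -
    have "((\<lambda>\<phi>. Z k (y \<phi> \<theta>)) has_real_derivative
       (\<Sum>i\<in>UNIV. (t *\<^sub>R vector [- sin \<theta> * sin \<phi>, sin \<theta> * cos \<phi>, 0] :: real^3) $ i * PZ k i (y \<phi> \<theta>))) (at \<phi> within S)"
      unfolding y_def by (rule chain3[OF vel_phi D[OF yU[unfolded y_def]]])
    then show ?thesis unfolding z_def ez_def q_def sum_3 by (simp add: algebra_simps)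
  qed
  define A where "A \<phi> \<theta> = t * sin \<theta> * (cos \<theta> * cos \<phi> * z 1 \<phi> \<theta> + cos \<theta> * sin \<phi> * z 2 \<phi> \<theta> - sin \<theta> * z 3 \<phi> \<theta>)" for \<phi> \<theta>
  define dA where "dA \<phi> \<theta> = t * cos \<theta> * (cos \<theta> * cos \<phi> * z 1 \<phi> \<theta> + cos \<theta> * sin \<phi> * z 2 \<phi> \<theta> - sin \<theta> * z 3 \<phi> \<theta>)
     + t * sin \<theta> * (- sin \<theta> * cos \<phi> * z 1 \<phi> \<theta> - sin \<theta> * sin \<phi> * z 2 \<phi> \<theta> - cos \<theta> * z 3 \<phi> \<theta>
        + cos \<theta> * cos \<phi> * dz 1 \<phi> \<theta> + cos \<theta> * sin \<phi> * dz 2 \<phi> \<theta> - sin \<theta> * dz 3 \<phi> \<theta>)" for \<phi> \<theta>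
  define B where "B \<phi> \<theta> = t * (- sin \<phi> * z 1 \<phi> \<theta> + cos \<phi> * z 2 \<phi> \<theta>)" for \<phi> \<theta>
  define dB where "dB \<phi> \<theta> = t * (- cos \<phi> * z 1 \<phi> \<theta> - sin \<phi> * z 2 \<phi> \<theta> - sin \<phi> * ez 1 \<phi> \<theta> + cos \<phi> * ez 2 \<phi> \<theta>)" for \<phi> \<theta>
  have AD: "((\<lambda>\<theta>. A \<phi> \<theta>) has_real_derivative dA \<phi> \<theta>) (at \<theta> within S)" for \<phi> \<theta> S
    unfolding A_def
    by (rule derivative_eq_intros dzD refl)+ (simp add: dA_def algebra_simps)
  have BD: "((\<lambda>\<phi>. B \<phi> \<theta>) has_real_derivative dB \<phi> \<theta>) (at \<phi> within S)" for \<phi> \<theta> S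
    unfolding B_def
    by (rule derivative_eq_intros ezD refl)+ (simp add: dB_def algebra_simps)
  have cdA: "continuous_on S (\<lambda>w. dA (fst w) (snd w))" for S
    unfolding dA_def dz_def by (intro continuous_intros cz cq)
  have cdB: "continuous_on S (\<lambda>w. dB (fst w) (snd w))" for S
    unfolding dB_def ez_def by (intro continuous_intros cz cq)
  have intA: "integral rect (\<lambda>w. dA (fst w) (snd w)) = 0"
  proof -
    have "integral rect (\<lambda>w. dA (fst w) (snd w)) = integral (cbox 0 (2*pi)) (\<lambda>\<phi>. integral (cbox 0 pi) (\<lambda>\<theta>. dA \<phi> \<theta>))"
      unfolding rect_def by (subst integral_prod_continuous[OF cdA]) simp
    also have "\<dots> = integral (cbox 0 (2*pi)) (\<lambda>\<phi>. 0)"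
    proof (rule integral_cong)
      fix \<phi>
      have "(dA \<phi> has_integral (A \<phi> pi - A \<phi> 0)) {0..pi}"
        by (rule fundamental_theorem_of_calculus)
           (auto simp: has_real_derivative_iff_has_vector_derivative[symmetric] intro: AD)
      then show "integral (cbox 0 pi) (dA \<phi>) = 0"
        by (simp add: A_def cbox_interval integral_unique)
    qed
    finally show ?thesis by simp
  qed
  have intB: "integral rect (\<lambda>w. dB (fst w) (snd w)) = 0"
  proof -
    have "integral rect (\<lambda>w. dB (fst w) (snd w)) = integral (cbox 0 (2*pi)) (\<lambda>\<phi>. integral (cbox 0 pi) (\<lambda>\<theta>. dB \<phi> \<theta>))"
      unfolding rect_def by (subst integral_prod_continuous[OF cdB]) simp
    also have "\<dots> = integral (cbox 0 pi) (\<lambda>\<theta>. integral (cbox 0 (2*pi)) (\<lambda>\<phi>. dB \<phi> \<theta>))"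
      by (rule integral_swap_continuous) (use cdB in \<open>simp add: split_def\<close>)
    also have "\<dots> = integral (cbox 0 pi) (\<lambda>\<theta>. 0)"
    proof (rule integral_cong)
      fix \<theta>
      have "((\<lambda>\<phi>. dB \<phi> \<theta>) has_integral (B (2*pi) \<theta> - B 0 \<theta>)) {0..2*pi}"
        by (rule fundamental_theorem_of_calculus)
           (auto simp: has_real_derivative_iff_has_vector_derivative[symmetric] intro: BD)
      moreover have "y (2*pi) \<theta> = y 0 \<theta>" by (simp add: y_def sph_def)
      ultimately show "integral (cbox 0 (2*pi)) (\<lambda>\<phi>. dB \<phi> \<theta>) = 0"
        by (simp add: B_def z_def cbox_interval integral_unique)
    qed
    finally show ?thesis by simp
  qed
  define G where "G \<xi> = (\<Sum>k\<in>UNIV. PZ k k (x + t *\<^sub>R \<xi>)) - (\<Sum>k\<in>UNIV. \<Sum>i\<in>UNIV. \<xi>$k * \<xi>$i * PZ k i (x + t *\<^sub>R \<xi>))" for \<xi>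
  define H where "H \<xi> = (\<Sum>k\<in>UNIV. \<xi>$k * Z k (x + t *\<^sub>R \<xi>))" for \<xi>
  have inU: "x + t *\<^sub>R \<xi> \<in> U" if "\<xi> \<in> sphere 0 1" for \<xi>
    using that U t by (auto simp: subset_iff dist_norm)
  have cG: "continuous_on (sphere 0 1) G"
    unfolding G_def by (intro continuous_intros continuous_on_compose2[OF cPZ] image_subsetI inU)
  have cH: "continuous_on (sphere 0 1) H"
    unfolding H_def by (intro continuous_intros continuous_on_compose2[OF cZ] image_subsetI inU)
  have pw: "(t^2 * G (sph (snd w) (fst w))) * sin (snd w) - (2 * t * H (sph (snd w) (fst w))) * sin (snd w)
      = dA (fst w) (snd w) + dB (fst w) (snd w)" for w
  proof -
    obtain \<phi> \<theta> where w: "w = (\<phi>, \<theta>)" by (cases w)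
    show ?thesis
      unfolding w G_def H_def dA_def dB_def dz_def ez_def z_def q_def y_def sum_3 sph_nth fst_conv snd_conv
      using sin_cos_squared_add[of \<theta>] sin_cos_squared_add[of \<phi>] by algebra
  qed
  have "t^2 * SA G - 2 * t * SA H =
     (integral rect (\<lambda>w. (t^2 * G (sph (snd w) (fst w))) * sin (snd w)) - integral rect (\<lambda>w. (2 * t * H (sph (snd w) (fst w))) * sin (snd w))) / (4*pi)"
    unfolding SA_def by (simp add: mult.assoc diff_divide_distrib)
  also have "\<dots> = integral rect (\<lambda>w. dA (fst w) (snd w) + dB (fst w) (snd w)) / (4*pi)"
  proof -
    have i1: "(\<lambda>w. (t^2 * G (sph (snd w) (fst w))) * sin (snd w)) integrable_on rect"
      using integrable_on_cmult_left[OF SA_integrable[OF cG], of "t^2"] by (simp add: mult.assoc)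
    have i2: "(\<lambda>w. (2 * t * H (sph (snd w) (fst w))) * sin (snd w)) integrable_on rect"
      using integrable_on_cmult_left[OF SA_integrable[OF cH], of "2*t"] by (simp add: mult.assoc)
    show ?thesis using integral_diff[OF i1 i2] pw by simp
  qed
  also have "\<dots> = 0"
  proof -
    have "(\<lambda>w. dA (fst w) (snd w)) integrable_on rect" unfolding rect_def by (rule integrable_continuous[OF cdA])
    moreover have "(\<lambda>w. dB (fst w) (snd w)) integrable_on rect" unfolding rect_def by (rule integrable_continuous[OF cdB])
    ultimately have "integral rect (\<lambda>w. dA (fst w) (snd w) + dB (fst w) (snd w)) = integral rect (\<lambda>w. dA (fst w) (snd w)) + integral rect (\<lambda>w. dB (fst w) (snd w))"
      by (rule integral_add)
    then show ?thesis using intA intB by simp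
  qed
  finally show ?thesis unfolding G_def H_def by simp
qed


lemma cont_snd_comp:
  assumes "continuous_on U f"
  shows "continuous_on (S \<times> U) (\<lambda>w. f (snd w))"
  by (rule continuous_on_compose2[OF assms continuous_on_snd]) auto

lemma KL:
  fixes Z :: "3 \<Rightarrow> real^3 \<Rightarrow> real" and PZ :: "3 \<Rightarrow> 3 \<Rightarrow> real^3 \<Rightarrow> real"
  assumes U: "cball x R \<subseteq> U" and s: "\<bar>s\<bar> < R"
    and D: "\<And>k y. y \<in> U \<Longrightarrow> (Z k has_derivative (\<lambda>h. \<Sum>i\<in>UNIV. h$i * PZ k i y)) (at y)"
    and cPZ: "\<And>k i. continuous_on U (PZ k i)"
  shows "((\<lambda>t. t^2 * SA (\<lambda>\<xi>. \<Sum>k\<in>UNIV. \<xi>$k * Z k (x + t *\<^sub>R \<xi>))) has_real_derivative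
           s^2 * SA (\<lambda>\<xi>. \<Sum>k\<in>UNIV. PZ k k (x + s *\<^sub>R \<xi>))) (at s)"
proof -
  have cZ: "continuous_on U (Z k)" for k by (rule cont_of_deriv[OF D])
  define F where "F \<xi> y = (\<Sum>k\<in>UNIV. \<xi>$k * Z k y)" for \<xi> :: "real^3" and y
  define P where "P i \<xi> y = (\<Sum>k\<in>UNIV. \<xi>$k * PZ k i y)" for i and \<xi> :: "real^3" and y
  have DF: "(F \<xi> has_derivative (\<lambda>h. \<Sum>i\<in>UNIV. h$i * P i \<xi> y)) (at y)" if "y \<in> U" for \<xi> y
  proof -
    have "(F \<xi> has_derivative (\<lambda>h. \<Sum>k\<in>UNIV. \<xi>$k * (\<Sum>i\<in>UNIV. h$i * PZ k i y))) (at y)"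
      unfolding F_def by (intro has_derivative_sum has_derivative_mult_right D that)
    moreover have "(\<lambda>h. \<Sum>k\<in>UNIV. \<xi>$k * (\<Sum>i\<in>UNIV. h$i * PZ k i y)) = (\<lambda>h. \<Sum>i\<in>UNIV. h$i * P i \<xi> y)"
    proof
      fix h :: "real^3"
      show "(\<Sum>k\<in>UNIV. \<xi>$k * (\<Sum>i\<in>UNIV. h$i * PZ k i y)) = (\<Sum>i\<in>UNIV. h$i * P i \<xi> y)"
        unfolding P_def sum_distrib_left by (subst sum.swap) (simp add: mult.left_commute)
    qed
    ultimately show ?thesis by simp
  qed
  have cP: "continuous_on (UNIV \<times> U) (\<lambda>(\<xi>,y). P i \<xi> y)" for i
    unfolding P_def split_def by (intro continuous_intros cont_snd_comp cPZ)
  have cF: "continuous_on (UNIV \<times> U) (\<lambda>(\<xi>,y). F \<xi> y)"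
    unfolding F_def split_def by (intro continuous_intros cont_snd_comp cZ)
  have rl: "((\<lambda>t. SA (\<lambda>\<xi>. F \<xi> (x + t *\<^sub>R \<xi>))) has_real_derivative
           SA (\<lambda>\<xi>. \<Sum>i\<in>UNIV. \<xi>$i * P i \<xi> (x + s *\<^sub>R \<xi>))) (at s)"
    by (rule RL[OF U s DF cP cF])
  have d1: "((\<lambda>t. t^2) has_real_derivative 2 * s) (at s)"
    by (auto intro!: derivative_eq_intros)
  have inU: "x + s *\<^sub>R \<xi> \<in> U" if "\<xi> \<in> sphere 0 1" for \<xi>
    using that U s by (auto simp: subset_iff dist_norm)
  have c1: "continuous_on (sphere 0 1) (\<lambda>\<xi>. \<Sum>k\<in>UNIV. PZ k k (x + s *\<^sub>R \<xi>))"
    by (intro continuous_intros continuous_on_compose2[OF cPZ] image_subsetI inU)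
  have c2: "continuous_on (sphere 0 1) (\<lambda>\<xi>. \<Sum>k\<in>UNIV. \<Sum>i\<in>UNIV. \<xi>$k * \<xi>$i * PZ k i (x + s *\<^sub>R \<xi>))"
    by (intro continuous_intros continuous_on_compose2[OF cPZ] image_subsetI inU)
  have si: "s^2 * (SA (\<lambda>\<xi>. \<Sum>k\<in>UNIV. PZ k k (x + s *\<^sub>R \<xi>)) - SA (\<lambda>\<xi>. \<Sum>k\<in>UNIV. \<Sum>i\<in>UNIV. \<xi>$k * \<xi>$i * PZ k i (x + s *\<^sub>R \<xi>)))
       = 2 * s * SA (\<lambda>\<xi>. \<Sum>k\<in>UNIV. \<xi>$k * Z k (x + s *\<^sub>R \<xi>))"
  proof -
    have "s^2 * SA (\<lambda>\<xi>. (\<Sum>k\<in>UNIV. PZ k k (x + s *\<^sub>R \<xi>)) - (\<Sum>k\<in>UNIV. \<Sum>i\<in>UNIV. \<xi>$k * \<xi>$i * PZ k i (x + s *\<^sub>R \<xi>)))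
       = 2 * s * SA (\<lambda>\<xi>. \<Sum>k\<in>UNIV. \<xi>$k * Z k (x + s *\<^sub>R \<xi>))"
      by (rule SI[OF U _ D cPZ]) (use s in auto)
    then show ?thesis using SA_diff[OF c1 c2] by simp
  qed
  have eq: "SA (\<lambda>\<xi>. \<Sum>i\<in>UNIV. \<xi>$i * P i \<xi> (x + s *\<^sub>R \<xi>)) = SA (\<lambda>\<xi>. \<Sum>k\<in>UNIV. \<Sum>i\<in>UNIV. \<xi>$k * \<xi>$i * PZ k i (x + s *\<^sub>R \<xi>))"
    unfolding P_def sum_distrib_left by (rule SA_cong, subst sum.swap) (simp add: mult.left_commute mult.assoc)
  have fin: "2 * s * SA (\<lambda>\<xi>. F \<xi> (x + s *\<^sub>R \<xi>)) + SA (\<lambda>\<xi>. \<Sum>i\<in>UNIV. \<xi>$i * P i \<xi> (x + s *\<^sub>R \<xi>)) * s^2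
     = s^2 * SA (\<lambda>\<xi>. \<Sum>k\<in>UNIV. PZ k k (x + s *\<^sub>R \<xi>))"
    unfolding eq F_def using si by algebra
  have "((\<lambda>t. t^2 * SA (\<lambda>\<xi>. F \<xi> (x + t *\<^sub>R \<xi>))) has_real_derivative s^2 * SA (\<lambda>\<xi>. \<Sum>k\<in>UNIV. PZ k k (x + s *\<^sub>R \<xi>))) (at s)"
    by (rule DERIV_cong[OF DERIV_mult[OF d1 rl]]) (use fin in simp)
  then show ?thesis by (simp only: F_def)
qed


definition HD :: "(real^3 \<Rightarrow> real) \<Rightarrow> (3 \<Rightarrow> real) \<Rightarrow> real^3 \<Rightarrow> bool" where
  "HD f P y \<longleftrightarrow> (f has_derivative (\<lambda>h. \<Sum>i\<in>UNIV. h$i * P i)) (at y)"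

lemma HD_cong: "HD f P y \<Longrightarrow> (\<And>i. P i = Q i) \<Longrightarrow> HD f Q y"
  unfolding HD_def by simp

lemma HD_const: "HD (\<lambda>z. c) (\<lambda>i. 0) y"
  unfolding HD_def by simp

lemma HD_nth: "HD (\<lambda>z. z$k) (\<lambda>i. if i = k then 1 else 0) y"
proof -
  have "((\<lambda>z::real^3. z$k) has_derivative (\<lambda>h. h$k)) (at y)"
    by (rule bounded_linear_imp_has_derivative) (rule bounded_linear_vec_nth)
  moreover have "(\<lambda>h::real^3. h$k) = (\<lambda>h. \<Sum>i\<in>UNIV. h$i * (if i = k then 1 else 0))"
    by (auto simp: if_distrib cong: if_cong)
  ultimately show ?thesis unfolding HD_def by simp
qed

lemma HD_add: "HD f P y \<Longrightarrow> HD g Q y \<Longrightarrow> HD (\<lambda>z. f z + g z) (\<lambda>i. P i + Q i) y"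
  unfolding HD_def by (drule (1) has_derivative_add) (simp add: distrib_left sum.distrib)

lemma HD_diff: "HD f P y \<Longrightarrow> HD g Q y \<Longrightarrow> HD (\<lambda>z. f z - g z) (\<lambda>i. P i - Q i) y"
  unfolding HD_def by (drule (1) has_derivative_diff) (simp add: right_diff_distrib sum_subtractf)

lemma HD_mult: "HD f P y \<Longrightarrow> HD g Q y \<Longrightarrow> HD (\<lambda>z. f z * g z) (\<lambda>i. f y * Q i + P i * g y) y"
  unfolding HD_def
  by (drule (1) has_derivative_mult)
     (simp add: distrib_left sum.distrib sum_distrib_left sum_distrib_right mult.assoc mult.left_commute)

lemma HD_sum: "(\<And>j. j \<in> J \<Longrightarrow> HD (f j) (P j) y) \<Longrightarrow> HD (\<lambda>z. \<Sum>j\<in>J. f j z) (\<lambda>i. \<Sum>j\<in>J. P j i) y"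
  unfolding HD_def
  by (drule has_derivative_sum) (simp add: sum_distrib_left, subst sum.swap, simp)

lemma axis_sum: "(\<Sum>j\<in>UNIV. (axis i 1 :: real^3) $ j * P j) = P i"
  using exhaust_3[of i] by (auto simp: sum_3 axis_def)

lemma HD_partial: "HD f P y \<Longrightarrow> partial i f y = P i"
  unfolding HD_def by (drule partial_eq[where i=i]) (simp only: axis_sum)

lemma HD_diffable: "f differentiable (at y) \<Longrightarrow> HD f (\<lambda>i. partial i f y) y"
  unfolding HD_def by (rule has_derivative_partial)





lemma delta_sum: "(\<Sum>j\<in>UNIV. (if i = j then 1 else 0) * f j) = (f (i::3) :: real)"
  using exhaust_3[of i] by (auto simp: sum_3)

lemma diff_cont: "(\<And>z. z \<in> S \<Longrightarrow> f differentiable (at z)) \<Longrightarrow> continuous_on S f"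
  by (rule continuous_at_imp_continuous_on) (use differentiable_imp_continuous_within in blast)

lemma get_R:
  fixes \<Omega> :: "(real^3) set"
  assumes "x \<in> \<Omega>" "0 < r" "frontier \<Omega> = {} \<or> r < infdist x (frontier \<Omega>)"
  obtains R where "r < R" "cball x R \<subseteq> \<Omega>"
proof -
  define R where "R = (if frontier \<Omega> = {} then r + 1 else (r + infdist x (frontier \<Omega>)) / 2)"
  have rR: "r < R" using assms(3) by (auto simp: R_def)
  have fr: "R < dist x w" if "w \<in> frontier \<Omega>" for w
  proof -
    have ne: "frontier \<Omega> \<noteq> {}" using that by auto
    then have "r < infdist x (frontier \<Omega>)" using assms(3) by auto
    moreover have "infdist x (frontier \<Omega>) \<le> dist x w" by (rule infdist_le[OF that])
    ultimately show ?thesis using ne by (auto simp: R_def)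
  qed
  have "cball x R \<subseteq> \<Omega>"
  proof (rule ccontr)
    assume "\<not> cball x R \<subseteq> \<Omega>"
    then have "cball x R - \<Omega> \<noteq> {}" by auto
    moreover have "x \<in> cball x R \<inter> \<Omega>" using assms(1,2) rR by auto
    then have "cball x R \<inter> \<Omega> \<noteq> {}" by blast
    ultimately have "cball x R \<inter> frontier \<Omega> \<noteq> {}"
      by (intro connected_Int_frontier) auto
    then obtain w where "w \<in> cball x R" "w \<in> frontier \<Omega>" by auto
    with fr show False by force
  qed
  with rR that show ?thesis by blast
qed

lemma divW:
  fixes u :: "real^3 \<Rightarrow> real^3"
  assumes op: "open \<Omega>" and y: "y \<in> \<Omega>"
    and du: "\<And>k z. z \<in> \<Omega> \<Longrightarrow> (\<lambda>z. u z$k) differentiable (at z)"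
    and ddu: "\<And>k i z. z \<in> \<Omega> \<Longrightarrow> partial i (\<lambda>z. u z$k) differentiable (at z)"
    and dv: "\<And>z. z \<in> \<Omega> \<Longrightarrow> (\<Sum>i\<in>UNIV. partial i (\<lambda>z. u z $ i) z) = 0"
  shows "(\<Sum>i\<in>UNIV. \<Sum>j\<in>UNIV. partial i (partial j (\<lambda>z. u z $ i * u z $ j)) y)
       = (\<Sum>k\<in>UNIV. \<Sum>j\<in>UNIV. partial k (\<lambda>z. u z$j) y * partial j (\<lambda>z. u z$k) y + u y$j * partial k (partial j (\<lambda>z. u z$k)) y)"
proof -
  define U where "U k = (\<lambda>z. u z$k)" for k
  define g where "g i j z = u z$i * partial j (U j) z + partial j (U i) z * u z$j" for i j z
  have pj: "partial j (\<lambda>z. u z$i * u z$j) z = g i j z" if "z \<in> \<Omega>" for i j z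
    unfolding g_def U_def by (rule HD_partial[OF HD_mult[OF HD_diffable[OF du] HD_diffable[OF du]]]) (use that in auto)
  have p2: "partial i (partial j (\<lambda>z. u z$i * u z$j)) y =
      u y$i * partial i (partial j (U j)) y + partial i (U i) y * partial j (U j) y
      + (partial j (U i) y * partial i (U j) y + partial i (partial j (U i)) y * u y$j)" for i j
  proof -
    have "partial i (partial j (\<lambda>z. u z$i * u z$j)) y = partial i (g i j) y"
      by (rule partial_local[OF op y pj])
    also have "\<dots> = u y$i * partial i (partial j (U j)) y + partial i (U i) y * partial j (U j) y
      + (partial j (U i) y * partial i (U j) y + partial i (partial j (U i)) y * u y$j)"
      unfolding g_def U_def
      by (rule HD_partial[OF HD_add[OF HD_mult[OF HD_diffable HD_diffable] HD_mult[OF HD_diffable HD_diffable]]])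
         (use du ddu y in \<open>auto simp: U_def\<close>)
    finally show ?thesis .
  qed
  have z1: "(\<Sum>j\<in>UNIV. partial j (U j) y) = 0" using dv[OF y] by (simp add: U_def)
  have z2: "(\<Sum>j\<in>UNIV. partial i (partial j (U j)) y) = 0" for i
  proof -
    have "partial i (\<lambda>z. \<Sum>j\<in>UNIV. partial j (U j) z) y = (\<Sum>j\<in>UNIV. partial i (partial j (U j)) y)"
      by (rule HD_partial[OF HD_sum[OF HD_diffable]]) (use ddu y in \<open>auto simp: U_def\<close>)
    moreover have "partial i (\<lambda>z. \<Sum>j\<in>UNIV. partial j (U j) z) y = partial i (\<lambda>z. 0) y"
      by (rule partial_local[OF op y]) (use dv in \<open>simp add: U_def\<close>)
    moreover have "partial i (\<lambda>z. 0) y = 0" by (rule HD_partial[OF HD_const])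
    ultimately show ?thesis by simp
  qed
  show ?thesis
    unfolding p2 U_def[symmetric]
    using z1 z2[of 1] z2[of 2] z2[of 3] unfolding sum_3 by algebra
qed


theorem lemma1:
  fixes \<Omega> :: "(real^3) set" and x v :: "real^3" and r :: real
    and u :: "real^3 \<Rightarrow> real^3" and p :: "real^3 \<Rightarrow> real"
  assumes "open \<Omega>" and "x \<in> \<Omega>" and "0 < r"
    and "frontier \<Omega> = {} \<or> r < infdist x (frontier \<Omega>)"
    and "\<forall>k. C2_on \<Omega> (\<lambda>y. u y $ k)"
    and "\<forall>y\<in>\<Omega>. (\<Sum>i\<in>UNIV. partial i (\<lambda>z. u z $ i) y) = 0"
    and "C2_on \<Omega> p"
    and "\<forall>y\<in>\<Omega>. - laplacian p y =
           (\<Sum>i\<in>UNIV. \<Sum>j\<in>UNIV. partial i (partial j (\<lambda>z. u z $ i * u z $ j)) y)"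
  shows "((\<lambda>s. sphere_avg (\<lambda>\<xi>. p (x + s *\<^sub>R \<xi>))
              + sphere_avg (\<lambda>\<xi>. (\<xi> \<bullet> (u (x + s *\<^sub>R \<xi>) - v))\<^sup>2))
          has_real_derivative
           (- (1 / r) * sphere_avg (\<lambda>\<xi>. 3 * (\<xi> \<bullet> (u (x + r *\<^sub>R \<xi>) - v))\<^sup>2
                                     - (norm (u (x + r *\<^sub>R \<xi>) - v))\<^sup>2))) (at r)"
proof -
  note op = assms(1) and x\<Omega> = assms(2) and r0 = assms(3)
  obtain R where rR: "r < R" and ball: "cball x R \<subseteq> \<Omega>"
    using get_R[OF assms(2,3,4)] by blast
  define U where "U k = (\<lambda>z. u z $ k)" for k
  define Du where "Du k i z = partial i (U k) z" for k i z
  define DDu where "DDu k j i z = partial i (partial j (U k)) z" for k j i z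
  define Dp where "Dp i z = partial i p z" for i z
  define DDp where "DDp k i z = partial i (partial k p) z" for k i z
  have du: "\<And>k z. z \<in> \<Omega> \<Longrightarrow> (\<lambda>z. u z$k) differentiable (at z)"
    and ddu: "\<And>k i z. z \<in> \<Omega> \<Longrightarrow> partial i (\<lambda>z. u z$k) differentiable (at z)"
    and cddu: "\<And>k i j. continuous_on \<Omega> (partial j (partial i (\<lambda>z. u z$k)))"
    using assms(5) unfolding C2_on_def by blast+
  have dp: "\<And>z. z \<in> \<Omega> \<Longrightarrow> p differentiable (at z)"
    and ddp: "\<And>i z. z \<in> \<Omega> \<Longrightarrow> partial i p differentiable (at z)"
    and cddp: "\<And>i j. continuous_on \<Omega> (partial j (partial i p))"
    using assms(7) unfolding C2_on_def by blast+
  have dv: "\<And>z. z \<in> \<Omega> \<Longrightarrow> (\<Sum>i\<in>UNIV. partial i (\<lambda>z. u z $ i) z) = 0" using assms(6) by blast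
  have hU: "HD (U k) (\<lambda>i. Du k i z) z" if "z \<in> \<Omega>" for k z
    unfolding U_def Du_def by (rule HD_diffable[OF du[OF that]])
  have hDu: "HD (\<lambda>z. Du k j z) (\<lambda>i. DDu k j i z) z" if "z \<in> \<Omega>" for k j z
    unfolding U_def Du_def DDu_def by (rule HD_diffable[OF ddu[OF that]])
  have hp: "HD p (\<lambda>i. Dp i z) z" if "z \<in> \<Omega>" for z
    unfolding Dp_def by (rule HD_diffable[OF dp[OF that]])
  have hDp: "HD (\<lambda>z. Dp k z) (\<lambda>i. DDp k i z) z" if "z \<in> \<Omega>" for k z
    unfolding Dp_def DDp_def by (rule HD_diffable[OF ddp[OF that]])
  have cU: "continuous_on \<Omega> (U k)" for k unfolding U_def by (rule diff_cont[OF du])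
  have cDu: "continuous_on \<Omega> (Du k i)" for k i unfolding Du_def U_def by (rule diff_cont[OF ddu])
  have cDDu: "continuous_on \<Omega> (DDu k j i)" for k j i unfolding DDu_def U_def by (rule cddu)
  have cp: "continuous_on \<Omega> p" by (rule diff_cont[OF dp])
  have cDp: "continuous_on \<Omega> (Dp i)" for i unfolding Dp_def by (rule diff_cont[OF ddp])
  have cDDp: "continuous_on \<Omega> (DDp k i)" for k i unfolding DDp_def by (rule cddp)
  have inO: "x + s *\<^sub>R \<xi> \<in> \<Omega>" if "\<bar>s\<bar> < R" "norm \<xi> = 1" for s \<xi>
    using that ball by (auto simp: subset_iff dist_norm)
  have cS: "continuous_on (sphere 0 1) (\<lambda>\<xi>. f (x + s *\<^sub>R \<xi>))" if "continuous_on \<Omega> f" "\<bar>s\<bar> < R" for f s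
    by (rule continuous_on_compose2[OF that(1)]) (auto intro!: continuous_intros inO[OF that(2)])
  have cSnd: "continuous_on (UNIV \<times> \<Omega>) (\<lambda>w. f (snd w))" if "continuous_on \<Omega> f" for f
    by (rule cont_snd_comp[OF that])
  \<comment> \<open>Step 1: the divergence identity for W\<close>
  define W where "W k z = Dp k z + (\<Sum>j\<in>UNIV. U j z * Du k j z)" for k z
  define PW where "PW k i z = DDp k i z + (\<Sum>j\<in>UNIV. U j z * DDu k j i z + Du j i z * Du k j z)" for k i z
  have hW: "(W k has_derivative (\<lambda>h. \<Sum>i\<in>UNIV. h$i * PW k i z)) (at z)" if "z \<in> \<Omega>" for k z
  proof -
    have "HD (W k) (\<lambda>i. PW k i z) z"
      unfolding W_def PW_def
      by (rule HD_add[OF hDp[OF that] HD_sum[OF HD_mult[OF hU[OF that] hDu[OF that]]]])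
    then show ?thesis unfolding HD_def .
  qed
  have cPW: "continuous_on \<Omega> (PW k i)" for k i
    unfolding PW_def by (intro continuous_intros cDDp cU cDDu cDu)
  have divW0: "(\<Sum>k\<in>UNIV. PW k k z) = 0" if "z \<in> \<Omega>" for z
  proof -
    have "(\<Sum>i\<in>UNIV. \<Sum>j\<in>UNIV. partial i (partial j (\<lambda>z. u z $ i * u z $ j)) z)
       = (\<Sum>k\<in>UNIV. \<Sum>j\<in>UNIV. partial k (\<lambda>z. u z$j) z * partial j (\<lambda>z. u z$k) z + u z$j * partial k (partial j (\<lambda>z. u z$k)) z)"
      by (rule divW[OF op that du ddu dv])
    moreover have "- laplacian p z = (\<Sum>i\<in>UNIV. \<Sum>j\<in>UNIV. partial i (partial j (\<lambda>z. u z $ i * u z $ j)) z)"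
      using assms(8) that by blast
    ultimately show ?thesis
      unfolding PW_def laplacian_def DDp_def DDu_def Du_def U_def
      by (simp add: sum.distrib algebra_simps)
  qed
  define Hf where "Hf t = t^2 * SA (\<lambda>\<xi>. \<Sum>k\<in>UNIV. \<xi>$k * W k (x + t *\<^sub>R \<xi>))" for t
  have Hd: "(Hf has_real_derivative 0) (at t)" if "\<bar>t\<bar> < R" for t
  proof -
    have "(Hf has_real_derivative t^2 * SA (\<lambda>\<xi>. \<Sum>k\<in>UNIV. PW k k (x + t *\<^sub>R \<xi>))) (at t)"
      unfolding Hf_def by (rule KL[OF ball that hW cPW])
    moreover have "SA (\<lambda>\<xi>. \<Sum>k\<in>UNIV. PW k k (x + t *\<^sub>R \<xi>)) = SA (\<lambda>\<xi>. 0)"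
      by (rule SA_cong) (simp add: divW0 inO[OF that])
    ultimately show ?thesis by (simp add: SA_def)
  qed
  have "Hf r = Hf 0"
  proof (rule DERIV_isconst2[of 0 r])
    show "continuous_on {0..r} Hf"
    proof (rule continuous_at_imp_continuous_on, rule ballI)
      fix t assume "t \<in> {0..r}"
      then have "\<bar>t\<bar> < R" using rR by auto
      then show "isCont Hf t" by (rule DERIV_isCont[OF Hd])
    qed
    show "DERIV Hf t :> 0" if "0 < t" "t < r" for t using Hd that rR by auto
  qed (use r0 in auto)
  then have E1: "SA (\<lambda>\<xi>. \<Sum>k\<in>UNIV. \<xi>$k * W k (x + r *\<^sub>R \<xi>)) = 0"
    using r0 by (simp add: Hf_def)
  have rR': "\<bar>r\<bar> < R" using r0 rR by simp
  have E2: "((\<lambda>t. SA (\<lambda>\<xi>. p (x + t *\<^sub>R \<xi>))) has_real_derivative SA (\<lambda>\<xi>. \<Sum>i\<in>UNIV. \<xi>$i * Dp i (x + r *\<^sub>R \<xi>))) (at r)"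
  proof (rule RL[where F="\<lambda>\<xi> y. p y" and P="\<lambda>i \<xi> y. Dp i y", OF ball rR'])
    show "(p has_derivative (\<lambda>h. \<Sum>i\<in>UNIV. h $ i * Dp i y)) (at y)" if "y \<in> \<Omega>" for y
      using hp[OF that] unfolding HD_def .
    show "continuous_on (UNIV \<times> \<Omega>) (\<lambda>(\<xi>, y). Dp i y)" for i
      using cSnd[OF cDp[of i]] by (simp add: split_def)
    show "continuous_on (UNIV \<times> \<Omega>) (\<lambda>(\<xi>, y). p y)"
      using cSnd[OF cp] by (simp add: split_def)
  qed
  define L where "L \<xi> y = (\<Sum>k\<in>UNIV. \<xi>$k * (U k y - v$k))" for \<xi> :: "real^3" and y
  define Fq where "Fq \<xi> y = L \<xi> y * L \<xi> y" for \<xi> y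
  define Pq where "Pq i \<xi> y = 2 * L \<xi> y * (\<Sum>k\<in>UNIV. \<xi>$k * Du k i y)" for i \<xi> y
  have hL: "HD (L \<xi>) (\<lambda>i. \<Sum>k\<in>UNIV. \<xi>$k * Du k i y) y" if "y \<in> \<Omega>" for \<xi> y
    unfolding L_def
    by (rule HD_cong[OF HD_sum[OF HD_mult[OF HD_const HD_diff[OF hU[OF that] HD_const]]]]) simp
  have hF: "(Fq \<xi> has_derivative (\<lambda>h. \<Sum>i\<in>UNIV. h$i * Pq i \<xi> y)) (at y)" if "y \<in> \<Omega>" for \<xi> y
  proof -
    have "HD (Fq \<xi>) (\<lambda>i. Pq i \<xi> y) y"
      unfolding Fq_def by (rule HD_cong[OF HD_mult[OF hL[OF that] hL[OF that]]]) (simp add: Pq_def)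
    then show ?thesis unfolding HD_def .
  qed
  have cL: "continuous_on (UNIV \<times> \<Omega>) (\<lambda>w. L (fst w) (snd w))"
    unfolding L_def by (intro continuous_intros cSnd cU)
  have E3: "((\<lambda>t. SA (\<lambda>\<xi>. Fq \<xi> (x + t *\<^sub>R \<xi>))) has_real_derivative SA (\<lambda>\<xi>. \<Sum>i\<in>UNIV. \<xi>$i * Pq i \<xi> (x + r *\<^sub>R \<xi>))) (at r)"
  proof (rule RL[OF ball rR' hF])
    show "continuous_on (UNIV \<times> \<Omega>) (\<lambda>(\<xi>, y). Pq i \<xi> y)" for i
      unfolding Pq_def split_def by (intro continuous_intros cL cSnd cDu)
    show "continuous_on (UNIV \<times> \<Omega>) (\<lambda>(\<xi>, y). Fq \<xi> y)"
      unfolding Fq_def split_def by (intro continuous_intros cL)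
  qed
  \<comment> \<open>Step 4: spherical integration by parts\<close>
  define M where "M y = (\<Sum>j\<in>UNIV. (y$j - x$j) * (U j y - v$j))" for y
  define Nv where "Nv y = (\<Sum>j\<in>UNIV. (y$j - x$j) * v$j)" for y
  define Z where "Z k y = M y * U k y - Nv y * (U k y - v$k)" for k y
  define PM where "PM i y = (\<Sum>j\<in>UNIV. (y$j - x$j) * Du j i y) + (U i y - v$i)" for i y
  define PZ where "PZ k i y = M y * Du k i y + PM i y * U k y - (Nv y * Du k i y + v$i * (U k y - v$k))" for k i y
  have hM: "HD M (\<lambda>i. PM i y) y" if "y \<in> \<Omega>" for y
    unfolding M_def
    by (rule HD_cong[OF HD_sum[OF HD_mult[OF HD_diff[OF HD_nth HD_const] HD_diff[OF hU[OF that] HD_const]]]])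
       (simp add: PM_def sum.distrib delta_sum)
  have hN: "HD Nv (\<lambda>i. v$i) y" for y
    unfolding Nv_def
    by (rule HD_cong[OF HD_sum[OF HD_mult[OF HD_diff[OF HD_nth HD_const] HD_const]]])
       (simp add: delta_sum)
  have hZ: "(Z k has_derivative (\<lambda>h. \<Sum>i\<in>UNIV. h$i * PZ k i y)) (at y)" if "y \<in> \<Omega>" for k y
  proof -
    have "HD (Z k) (\<lambda>i. PZ k i y) y"
      unfolding Z_def
      by (rule HD_cong[OF HD_diff[OF HD_mult[OF hM[OF that] hU[OF that]] HD_mult[OF hN HD_diff[OF hU[OF that] HD_const]]]])
         (simp add: PZ_def)
    then show ?thesis unfolding HD_def .
  qed
  have cPZ: "continuous_on \<Omega> (PZ k i)" for k i
    unfolding PZ_def PM_def M_def Nv_def by (intro continuous_intros cU cDu)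
  have E4: "r^2 * SA (\<lambda>\<xi>. (\<Sum>k\<in>UNIV. PZ k k (x + r *\<^sub>R \<xi>)) - (\<Sum>k\<in>UNIV. \<Sum>i\<in>UNIV. \<xi>$k * \<xi>$i * PZ k i (x + r *\<^sub>R \<xi>)))
       = 2 * r * SA (\<lambda>\<xi>. \<Sum>k\<in>UNIV. \<xi>$k * Z k (x + r *\<^sub>R \<xi>))"
    by (rule SI[OF ball _ hZ cPZ]) (use rR' in simp)
  define y where "y \<xi> = x + r *\<^sub>R \<xi>" for \<xi> :: "real^3"
  define fa where "fa \<xi> = (\<Sum>i\<in>UNIV. \<xi>$i * Dp i (y \<xi>))" for \<xi>
  define fb where "fb \<xi> = (\<Sum>k\<in>UNIV. \<xi>$k * (\<Sum>j\<in>UNIV. U j (y \<xi>) * Du k j (y \<xi>)))" for \<xi>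
  define fq where "fq \<xi> = (\<Sum>i\<in>UNIV. \<xi>$i * Pq i \<xi> (y \<xi>))" for \<xi>
  define fS where "fS \<xi> = Fq \<xi> (y \<xi>)" for \<xi>
  define fN where "fN \<xi> = (\<Sum>k\<in>UNIV. (U k (y \<xi>) - v$k) * (U k (y \<xi>) - v$k))" for \<xi>
  have cy: "continuous_on (sphere 0 1) (\<lambda>\<xi>. f (y \<xi>))" if "continuous_on \<Omega> f" for f
    unfolding y_def by (rule cS[OF that rR'])
  have cfa: "continuous_on (sphere 0 1) fa" unfolding fa_def by (intro continuous_intros cy cDp)
  have cfb: "continuous_on (sphere 0 1) fb" unfolding fb_def by (intro continuous_intros cy cDu cU)
  have cLy: "continuous_on (sphere 0 1) (\<lambda>\<xi>. L \<xi> (y \<xi>))" unfolding L_def by (intro continuous_intros cy cU)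
  have cfq: "continuous_on (sphere 0 1) fq" unfolding fq_def Pq_def by (intro continuous_intros cy cDu cLy)
  have cfS: "continuous_on (sphere 0 1) fS" unfolding fS_def Fq_def by (intro continuous_intros cLy)
  have cfN: "continuous_on (sphere 0 1) fN" unfolding fN_def by (intro continuous_intros cy cU)
  have E1': "SA fa + SA fb = 0"
  proof -
    have "SA (\<lambda>\<xi>. \<Sum>k\<in>UNIV. \<xi>$k * W k (x + r *\<^sub>R \<xi>)) = SA (\<lambda>\<xi>. fa \<xi> + fb \<xi>)"
      by (rule SA_cong) (simp add: W_def fa_def fb_def y_def distrib_left sum.distrib)
    then show ?thesis using E1 SA_add[OF cfa cfb] by simp
  qed
  have E4': "SA (\<lambda>\<xi>. (\<Sum>k\<in>UNIV. PZ k k (x + r *\<^sub>R \<xi>)) - (\<Sum>k\<in>UNIV. \<Sum>i\<in>UNIV. \<xi>$k * \<xi>$i * PZ k i (x + r *\<^sub>R \<xi>)))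
     = r * (SA fb - SA fq) + (SA fN - SA fS)"
  proof -
    have "SA (\<lambda>\<xi>. (\<Sum>k\<in>UNIV. PZ k k (x + r *\<^sub>R \<xi>)) - (\<Sum>k\<in>UNIV. \<Sum>i\<in>UNIV. \<xi>$k * \<xi>$i * PZ k i (x + r *\<^sub>R \<xi>)))
       = SA (\<lambda>\<xi>. r * (fb \<xi> - fq \<xi>) + (fN \<xi> - fS \<xi>))"
    proof (rule SA_cong)
      fix \<xi> :: "real^3" assume n: "norm \<xi> = 1"
      have yO: "y \<xi> \<in> \<Omega>" unfolding y_def by (rule inO[OF rR' n])
      have dv0: "Du 1 1 (y \<xi>) + Du 2 2 (y \<xi>) + Du 3 3 (y \<xi>) = 0"
        using dv[OF yO] by (simp add: Du_def U_def sum_3)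
      have comp: "y \<xi> $ j - x $ j = r * \<xi> $ j" for j by (simp add: y_def)
      show "(\<Sum>k\<in>UNIV. PZ k k (x + r *\<^sub>R \<xi>)) - (\<Sum>k\<in>UNIV. \<Sum>i\<in>UNIV. \<xi>$k * \<xi>$i * PZ k i (x + r *\<^sub>R \<xi>))
          = r * (fb \<xi> - fq \<xi>) + (fN \<xi> - fS \<xi>)"
        unfolding y_def[symmetric] PZ_def PM_def M_def Nv_def fb_def fq_def fN_def fS_def Pq_def Fq_def L_def comp sum_3
        using dv0 by algebra
    qed
    also have "\<dots> = r * (SA fb - SA fq) + (SA fN - SA fS)"
      by (subst SA_add) (auto simp: SA_cmult SA_diff cfb cfq cfN cfS intro!: continuous_intros)
    finally show ?thesis .
  qed
  have E5: "SA (\<lambda>\<xi>. \<Sum>k\<in>UNIV. \<xi>$k * Z k (x + r *\<^sub>R \<xi>)) = r * SA fS"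
  proof -
    have "SA (\<lambda>\<xi>. \<Sum>k\<in>UNIV. \<xi>$k * Z k (x + r *\<^sub>R \<xi>)) = SA (\<lambda>\<xi>. r * fS \<xi>)"
    proof (rule SA_cong)
      fix \<xi> :: "real^3"
      have comp: "y \<xi> $ j - x $ j = r * \<xi> $ j" for j by (simp add: y_def)
      show "(\<Sum>k\<in>UNIV. \<xi>$k * Z k (x + r *\<^sub>R \<xi>)) = r * fS \<xi>"
        unfolding y_def[symmetric] Z_def M_def Nv_def fS_def Fq_def L_def comp sum_3
        by algebra
    qed
    then show ?thesis by (simp add: SA_cmult)
  qed
  have key: "SA fa + SA fq = - (1 / r) * (3 * SA fS - SA fN)"
  proof -
    have "r^2 * (r * (SA fb - SA fq) + (SA fN - SA fS)) = 2 * r * (r * SA fS)"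
      using E4 E4' E5 by simp
    also have "2 * r * (r * SA fS) = r^2 * (2 * SA fS)" by (simp add: power2_eq_square)
    finally have "r^2 * (r * (SA fb - SA fq) + (SA fN - SA fS)) = r^2 * (2 * SA fS)" .
    then have "r * (SA fb - SA fq) + (SA fN - SA fS) = 2 * SA fS"
      using r0 by (subst (asm) mult_left_cancel) auto
    moreover have "SA fa = - SA fb" using E1' by simp
    ultimately have "r * SA fa + (r * SA fq + SA fS * 3) = SA fN" by algebra
    then show ?thesis using r0 by (simp add: field_simps)
  qed
  have Qeq: "(\<xi> \<bullet> (u (x + s *\<^sub>R \<xi>) - v))\<^sup>2 = Fq \<xi> (x + s *\<^sub>R \<xi>)" for s \<xi>
    by (simp add: Fq_def L_def U_def inner_vec_def power2_eq_square)
  have Neq: "(norm (u (x + s *\<^sub>R \<xi>) - v))\<^sup>2 = (\<Sum>k\<in>UNIV. (U k (x + s *\<^sub>R \<xi>) - v$k) * (U k (x + s *\<^sub>R \<xi>) - v$k))" for s \<xi>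
    by (simp add: power2_norm_eq_inner inner_vec_def U_def)
  have cFs: "continuous_on (sphere 0 1) (\<lambda>\<xi>. Fq \<xi> (x + s *\<^sub>R \<xi>))" if "\<bar>s\<bar> < R" for s
    unfolding Fq_def L_def by (intro continuous_intros cS[OF _ that] cU)
  have D: "((\<lambda>s. SA (\<lambda>\<xi>. p (x + s *\<^sub>R \<xi>)) + SA (\<lambda>\<xi>. Fq \<xi> (x + s *\<^sub>R \<xi>))) has_real_derivative SA fa + SA fq) (at r)"
  proof -
    have "fa = (\<lambda>\<xi>. \<Sum>i\<in>UNIV. \<xi>$i * Dp i (x + r *\<^sub>R \<xi>))" by (rule ext) (simp add: fa_def y_def)
    moreover have "fq = (\<lambda>\<xi>. \<Sum>i\<in>UNIV. \<xi>$i * Pq i \<xi> (x + r *\<^sub>R \<xi>))" by (rule ext) (simp add: fq_def y_def)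
    ultimately show ?thesis using DERIV_add[OF E2 E3] by simp
  qed
  have rhs: "sphere_avg (\<lambda>\<xi>. 3 * (\<xi> \<bullet> (u (x + r *\<^sub>R \<xi>) - v))\<^sup>2 - (norm (u (x + r *\<^sub>R \<xi>) - v))\<^sup>2) = 3 * SA fS - SA fN"
  proof -
    have "(\<lambda>\<xi>. 3 * (\<xi> \<bullet> (u (x + r *\<^sub>R \<xi>) - v))\<^sup>2 - (norm (u (x + r *\<^sub>R \<xi>) - v))\<^sup>2) = (\<lambda>\<xi>. 3 * fS \<xi> - fN \<xi>)"
      unfolding Qeq Neq by (simp add: fS_def fN_def y_def)
    moreover have "continuous_on (sphere 0 1) (\<lambda>\<xi>. 3 * fS \<xi> - fN \<xi>)"
      by (intro continuous_intros cfS cfN)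
    ultimately show ?thesis
      by (simp add: sphere_avg_SA SA_diff SA_cmult cfS cfN continuous_intros)
  qed
  show ?thesis
  proof (rule has_field_derivative_transform_within_open[OF _ open_greaterThanLessThan[of "-R" R]])
    show "((\<lambda>s. SA (\<lambda>\<xi>. p (x + s *\<^sub>R \<xi>)) + SA (\<lambda>\<xi>. Fq \<xi> (x + s *\<^sub>R \<xi>))) has_real_derivative
       - (1 / r) * sphere_avg (\<lambda>\<xi>. 3 * (\<xi> \<bullet> (u (x + r *\<^sub>R \<xi>) - v))\<^sup>2 - (norm (u (x + r *\<^sub>R \<xi>) - v))\<^sup>2)) (at r)"
      using D key rhs by simp
    show "r \<in> {-R<..<R}" using rR' by auto
    fix s assume "s \<in> {-R<..<R}"
    then have s: "\<bar>s\<bar> < R" by auto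
    show "SA (\<lambda>\<xi>. p (x + s *\<^sub>R \<xi>)) + SA (\<lambda>\<xi>. Fq \<xi> (x + s *\<^sub>R \<xi>)) =
       sphere_avg (\<lambda>\<xi>. p (x + s *\<^sub>R \<xi>)) + sphere_avg (\<lambda>\<xi>. (\<xi> \<bullet> (u (x + s *\<^sub>R \<xi>) - v))\<^sup>2)"
      unfolding Qeq using sphere_avg_SA[OF cS[OF cp s]] sphere_avg_SA[OF cFs[OF s]] by simp
  qed
qed


end
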